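(* Let $n\ge5$, $x_1,\dots,x_{n-1}>0$, $\gamma,\delta>0$ with $\gamma\ne1\ne\delta$, $x_0=1$, and let $\mathbf{R}$ be the $n\times n$ matrix with entries $r_{ij}=x_{j-1}/x_{i-1}$ except $r_{12}=\delta x_1$, $r_{21}=1/(\delta x_1)$, $r_{34}=\gamma x_3/x_2$, $r_{43}=x_2/(\gamma x_3)$. Let $\mathbf{w}^{EM}$ be its principal right eigenvector. Then for $i=5,\dots,n$: $\delta>1$ iff $w_2^{EM}/w_i^{EM}<x_{i-1}/x_1$, and $\delta<1$ iff $w_2^{EM}/w_i^{EM}>x_{i-1}/x_1$.
   Context: The principal right eigenvector is the positive (Perron) eigenvector belonging to the largest eigenvalue. *)

theory Defs
  imports Complex_Main
begin

text \<open>Matrices are represented as functions nat => nat => real with indices 1..n,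
  vectors as functions nat => real with indices 1..n.\<close>

definition pcm_R :: "(nat \<Rightarrow> real) \<Rightarrow> real \<Rightarrow> real \<Rightarrow> nat \<Rightarrow> nat \<Rightarrow> real" where
  "pcm_R x \<gamma> \<delta> i j =
     (if i = 1 \<and> j = 2 then \<delta> * x 1
      else if i = 2 \<and> j = 1 then 1 / (\<delta> * x 1)
      else if i = 3 \<and> j = 4 then \<gamma> * x 3 / x 2
      else if i = 4 \<and> j = 3 then x 2 / (\<gamma> * x 3)
      else x (j - 1) / x (i - 1))"

definition principal_right_eigenvector ::
  "nat \<Rightarrow> (nat \<Rightarrow> nat \<Rightarrow> real) \<Rightarrow> (nat \<Rightarrow> real) \<Rightarrow> bool" where
  "principal_right_eigenvector n A w \<longleftrightarrow>
     (\<forall>i\<in>{1..n}. w i > 0) \<and>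
     (\<exists>r::real.
        (\<forall>i\<in>{1..n}. (\<Sum>j=1..n. A i j * w j) = r * w i) \<and>
        (\<forall>(\<mu>::complex) (v::nat \<Rightarrow> complex).
            (\<exists>i\<in>{1..n}. v i \<noteq> 0) \<and>
            (\<forall>i\<in>{1..n}. (\<Sum>j=1..n. complex_of_real (A i j) * v j) = \<mu> * v i)
            \<longrightarrow> cmod \<mu> \<le> r))"

end

theory Submission
  imports Defs
begin

theorem mainTheorem18:
  fixes n :: nat and x :: "nat \<Rightarrow> real" and \<gamma> \<delta> :: real and w :: "nat \<Rightarrow> real"
  assumes "n \<ge> 5"
    and "\<forall>k\<in>{1..n-1}. x k > 0"
    and "x 0 = 1"
    and "\<gamma> > 0" and "\<delta> > 0" and "\<gamma> \<noteq> 1" and "\<delta> \<noteq> 1"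
    and "principal_right_eigenvector n (pcm_R x \<gamma> \<delta>) w"
  shows "\<forall>i\<in>{5..n}. (\<delta> > 1 \<longleftrightarrow> w 2 / w i < x (i - 1) / x 1) \<and>
                     (\<delta> < 1 \<longleftrightarrow> w 2 / w i > x (i - 1) / x 1)"
proof
  fix i assume i: "i \<in> {5..n}"
  have xpos: "\<And>j. j \<in> {1..n} \<Longrightarrow> x (j - 1) > 0"
  proof -
    fix j assume j: "j \<in> {1..n}"
    show "x (j - 1) > 0"
    proof (cases "j = 1")
      case True then show ?thesis using assms(3) by simp
    next
      case False then have "j - 1 \<in> {1..n-1}" using j by auto
      then show ?thesis using assms(2) by blast
    qed
  qed
  have wpos: "\<forall>j\<in>{1..n}. w j > 0" and
    "\<exists>r. \<forall>k\<in>{1..n}. (\<Sum>j=1..n. pcm_R x \<gamma> \<delta> k j * w j) = r * w k"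
    using assms(8) unfolding principal_right_eigenvector_def by blast+
  then obtain r where eig: "\<forall>k\<in>{1..n}. (\<Sum>j=1..n. pcm_R x \<gamma> \<delta> k j * w j) = r * w k"
    by blast
  define u where "u j = w j * x (j - 1)" for j
  define S where "S = (\<Sum>j=1..n. u j)"
  have x1: "x 1 > 0" using xpos[of 2] assms(1) by simp
  have xi: "x (i - 1) > 0" using xpos[of i] i by simp
  have upos: "\<And>j. j \<in> {1..n} \<Longrightarrow> u j > 0" using wpos xpos u_def by simp
  have Spos: "S > 0" unfolding S_def
    by (rule sum_pos) (use upos assms(1) in auto)
  have "(\<Sum>j=1..n. pcm_R x \<gamma> \<delta> i j * w j) = (\<Sum>j=1..n. u j / x (i - 1))"
    by (rule sum.cong) (use i in \<open>auto simp: pcm_R_def u_def\<close>)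
  also have "\<dots> = S / x (i - 1)" by (simp add: S_def sum_divide_distrib)
  finally have "S / x (i - 1) = r * w i" using eig i by auto
  hence rowi: "S = r * u i" using xi by (simp add: u_def field_simps)
  have "(\<Sum>j=1..n. pcm_R x \<gamma> \<delta> 2 j * w j) =
        (\<Sum>j=1..n. u j / x 1 + (if j = 1 then w 1 / (\<delta> * x 1) - w 1 / x 1 else 0))"
    by (rule sum.cong) (use assms(3) in \<open>auto simp: pcm_R_def u_def\<close>)
  also have "\<dots> = S / x 1 + (w 1 / (\<delta> * x 1) - w 1 / x 1)"
    using assms(1) by (simp add: sum.distrib S_def sum_divide_distrib)
  finally have "S / x 1 + (w 1 / (\<delta> * x 1) - w 1 / x 1) = r * w 2"
    using eig assms(1) by auto
  hence "x 1 * (S / x 1 + (w 1 / (\<delta> * x 1) - w 1 / x 1)) = x 1 * (r * w 2)" by simp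
  hence "S + (w 1 / \<delta> - w 1) = r * u 2"
    using x1 assms(5) by (simp add: u_def algebra_simps)
  hence key: "r * (u 2 - u i) = (1 / \<delta> - 1) * w 1" using rowi by (simp add: algebra_simps)
  have ui: "u i > 0" using upos i by auto
  have rpos: "r > 0" using rowi Spos ui by (simp add: zero_less_mult_iff)
  have w1: "w 1 > 0" using wpos assms(1) by auto
  have d1: "\<delta> > 1 \<longleftrightarrow> u 2 < u i"
  proof -
    have "\<delta> > 1 \<longleftrightarrow> (1 / \<delta> - 1) * w 1 < 0" using assms(5) w1
      by (auto simp: mult_less_0_iff field_simps)
    also have "\<dots> \<longleftrightarrow> u 2 < u i" unfolding key[symmetric] using rpos by (simp add: mult_less_0_iff)
    finally show ?thesis .
  qed
  have d2: "\<delta> < 1 \<longleftrightarrow> u 2 > u i"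
  proof -
    have "\<delta> < 1 \<longleftrightarrow> (1 / \<delta> - 1) * w 1 > 0" using assms(5) w1
      by (auto simp: zero_less_mult_iff field_simps)
    also have "\<dots> \<longleftrightarrow> u 2 > u i" unfolding key[symmetric] using rpos by (simp add: zero_less_mult_iff)
    finally show ?thesis .
  qed
  have wi: "w i > 0" using wpos i by auto
  have eq: "w 2 / w i = (u 2 / u i) * (x (i - 1) / x 1)"
    using wi x1 xi by (simp add: u_def field_simps)
  have c1: "w 2 / w i < x (i - 1) / x 1 \<longleftrightarrow> u 2 < u i"
    unfolding eq using xi x1 ui by (simp add: field_simps)
  have c2: "w 2 / w i > x (i - 1) / x 1 \<longleftrightarrow> u 2 > u i"
    unfolding eq using xi x1 ui by (simp add: field_simps)
  show "(\<delta> > 1 \<longleftrightarrow> w 2 / w i < x (i - 1) / x 1) \<and>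
        (\<delta> < 1 \<longleftrightarrow> w 2 / w i > x (i - 1) / x 1)"
    using d1 d2 c1 c2 by blast
qed

end
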